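(* For any positive integer $n$, there exists a finite graph $G_n$ such that the canonical semi-ring $R(G_n)=\bigoplus_{m=0}^\infty R(G_n, mK_{G_n})$ is not generated in degree at most $n-1$, i.e. it is not generated as a graded semi-ring over ${\mathbb{Z}}^{\mathrm{trop}}$ by elements of $\bigoplus_{m=0}^{n-1}R(G_n,mK_{G_n})$.
   Context: A finite graph $G$ is connected, loops and multiple edges allowed. A divisor is $D=\sum_{x\in V(G)}D(x)[x]$, $D(x)\in{\mathbb{Z}}$; effective if all $D(x)\ge0$. A rational function is $f:V(G)\to{\mathbb{Z}}$; $\mathrm{ord}_x(f)=\sum_{e=\overline{xy}\in E(G)}(f(y)-f(x))$, $\mathrm{div}(f)=\sum_x\mathrm{ord}_x(f)[x]$. $R(G,D)=\{f: D+\mathrm{div}(f)\ge0\}$. $K_G=\sum_x(\mathrm{val}(x)-2)[x]$. The direct sum $\bigoplus_m R(G,mK_G)$ is a graded semi-ring over ${\mathbb{Z}}^{\mathrm{trop}}=({\mathbb{Z}},\max,+)$ with sum $\max$ in each degree, action $c\odot f=c+f$, product $f\odot g=f+g$ (degrees add). A set $S$ of homogeneous elements generates it if every homogeneous element is a finite tropical sum of ${\mathbb{Z}}^{\mathrm{trop}}$-multiples of tropical products of elements of $S$. *)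

theory Defs
  imports Main
begin

(* A finite connected multigraph (loops and multiple edges allowed) on a vertex
   set V :: nat set.  mult x y = number of edges joining x and y (x \<noteq> y);
   mult x x = number of loops at x. *)
definition fin_conn_graph :: "nat set \<Rightarrow> (nat \<Rightarrow> nat \<Rightarrow> nat) \<Rightarrow> bool" where
  "fin_conn_graph V mult \<longleftrightarrow>
     finite V \<and> V \<noteq> {} \<and>
     (\<forall>x y. mult x y = mult y x) \<and>
     (\<forall>x y. mult x y > 0 \<longrightarrow> x \<in> V \<and> y \<in> V) \<and>
     (\<forall>x\<in>V. \<forall>y\<in>V. (x, y) \<in> {(a, b). mult a b > 0}\<^sup>*)"

definition val :: "nat set \<Rightarrow> (nat \<Rightarrow> nat \<Rightarrow> nat) \<Rightarrow> nat \<Rightarrow> int" where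
  "val V mult x = (\<Sum>y\<in>V - {x}. int (mult x y)) + 2 * int (mult x x)"

definition ord :: "nat set \<Rightarrow> (nat \<Rightarrow> nat \<Rightarrow> nat) \<Rightarrow> (nat \<Rightarrow> int) \<Rightarrow> nat \<Rightarrow> int" where
  "ord V mult f x = (\<Sum>y\<in>V. int (mult x y) * (f y - f x))"

definition canon :: "nat set \<Rightarrow> (nat \<Rightarrow> nat \<Rightarrow> nat) \<Rightarrow> nat \<Rightarrow> int" where
  "canon V mult x = val V mult x - 2"

(* R(G, D): rational functions f with D + div f effective (only values on V matter) *)
definition RR :: "nat set \<Rightarrow> (nat \<Rightarrow> nat \<Rightarrow> nat) \<Rightarrow> (nat \<Rightarrow> int) \<Rightarrow> (nat \<Rightarrow> int) set" where
  "RR V mult D = {f. \<forall>x\<in>V. D x + ord V mult f x \<ge> 0}"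

definition RK :: "nat set \<Rightarrow> (nat \<Rightarrow> nat \<Rightarrow> nat) \<Rightarrow> nat \<Rightarrow> (nat \<Rightarrow> int) set" where
  "RK V mult m = RR V mult (\<lambda>x. int m * canon V mult x)"

(* homogeneous elements of the canonical semi-ring: pairs (degree, function) *)
definition homog :: "nat set \<Rightarrow> (nat \<Rightarrow> nat \<Rightarrow> nat) \<Rightarrow> (nat \<times> (nat \<Rightarrow> int)) set" where
  "homog V mult = {(m, f). f \<in> RK V mult m}"

(* S generates: every homogeneous element of degree m is (on V) a finite nonempty
   tropical sum (max) of terms c \<odot> (g_1 \<odot> ... \<odot> g_k) with c \<in> \<int> and g_j \<in> S,
   where the degrees of the g_j add up to m. *)
definition generates :: "nat set \<Rightarrow> (nat \<Rightarrow> nat \<Rightarrow> nat) \<Rightarrow> (nat \<times> (nat \<Rightarrow> int)) set \<Rightarrow> bool" where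
  "generates V mult S \<longleftrightarrow>
     S \<subseteq> homog V mult \<and>
     (\<forall>m h. h \<in> RK V mult m \<longrightarrow>
        (\<exists>ts :: (int \<times> (nat \<times> (nat \<Rightarrow> int)) list) list.
            ts \<noteq> [] \<and>
            (\<forall>t\<in>set ts. set (snd t) \<subseteq> S \<and> sum_list (map fst (snd t)) = m) \<and>
            (\<forall>x\<in>V. h x = Max ((\<lambda>t. fst t + sum_list (map (\<lambda>g. snd g x) (snd t))) ` set ts))))"

end

theory Submission
  imports Defs
begin

definition M :: "nat \<Rightarrow> nat \<Rightarrow> nat \<Rightarrow> nat" where
  "M n x y = (if (x = 0 \<and> y = 1) \<or> (x = 1 \<and> y = 0) then 2 * n else 0)"

lemma ord0: "ord {0,1} (M n) f 0 = 2 * int n * (f 1 - f 0)"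
  by (simp add: ord_def M_def)

lemma ord1: "ord {0,1} (M n) f 1 = 2 * int n * (f 0 - f 1)"
  by (simp add: ord_def M_def)

lemma canon0: "canon {0,1} (M n) 0 = 2 * int n - 2"
  by (simp add: canon_def val_def M_def)

lemma canon1: "canon {0,1} (M n) 1 = 2 * int n - 2"
  by (simp add: canon_def val_def M_def insert_Diff_if)

lemma RK_iff: "f \<in> RK {0,1} (M n) m \<longleftrightarrow>
   int m * (2 * int n - 2) + 2 * int n * (f 1 - f 0) \<ge> 0 \<and>
   int m * (2 * int n - 2) + 2 * int n * (f 0 - f 1) \<ge> 0"
  unfolding RK_def RR_def using ord0[of n f] ord1[of n f] canon0[of n] canon1[of n] by simp

lemma gen_bound:
  fixes n m :: nat and d :: int
  assumes "n \<ge> 1" "m \<le> n - 1" "2 * int n * d \<le> int m * (2 * int n - 2)"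
  shows "(int n - 1) * d \<le> (int n - 2) * int m"
proof (cases "m = 0")
  case True
  then have "2 * int n * d \<le> 0" using assms by simp
  moreover have "2 * int n > 0" using assms by simp
  ultimately have "d \<le> 0" by (simp add: mult_le_0_iff)
  moreover have "int n - 1 \<ge> 0" using assms by simp
  ultimately show ?thesis using True by (simp add: mult_nonneg_nonpos)
next
  case False
  have "int n * d \<le> int m * (int n - 1)" using assms(3) by (simp add: algebra_simps)
  also have "\<dots> < int n * int m" using False assms by (simp add: algebra_simps)
  finally have "int n * d < int n * int m" .
  then have "d < int m" using assms(1)
    by (simp add: mult_less_cancel_left)
  then have "d \<le> int m - 1" by simp
  then have "(int n - 1) * d \<le> (int n - 1) * (int m - 1)" using assms(1)
    by (simp add: mult_left_mono)
  also have "\<dots> \<le> (int n - 2) * int m" using assms(2) assms(1) by (simp add: algebra_simps)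
  finally show ?thesis .
qed

lemma list_bound:
  fixes n :: nat and l :: "(nat \<times> (nat \<Rightarrow> int)) list"
  assumes "\<forall>g\<in>set l. (int n - 1) * (snd g 1 - snd g 0) \<le> (int n - 2) * int (fst g)"
  shows "(int n - 1) * (sum_list (map (\<lambda>g. snd g 1) l) - sum_list (map (\<lambda>g. snd g 0) l))
          \<le> (int n - 2) * int (sum_list (map fst l))"
  using assms
proof (induction l)
  case Nil then show ?case by simp
next
  case (Cons a l)
  then have A: "(int n - 1) * (snd a 1 - snd a 0) \<le> (int n - 2) * int (fst a)"
    and B: "(int n - 1) * (sum_list (map (\<lambda>g. snd g 1) l) - sum_list (map (\<lambda>g. snd g 0) l))
          \<le> (int n - 2) * int (sum_list (map fst l))" by auto
  have "(int n - 1) * (sum_list (map (\<lambda>g. snd g 1) (a # l)) - sum_list (map (\<lambda>g. snd g 0) (a # l)))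
     = (int n - 1) * (snd a 1 - snd a 0) + (int n - 1) * (sum_list (map (\<lambda>g. snd g 1) l) - sum_list (map (\<lambda>g. snd g 0) l))"
    by (simp add: algebra_simps)
  also have "\<dots> \<le> (int n - 2) * int (fst a) + (int n - 2) * int (sum_list (map fst l))"
    using A B by linarith
  also have "\<dots> = (int n - 2) * int (sum_list (map fst (a # l)))" by (simp add: algebra_simps)
  finally show ?case .
qed

theorem theorem3p6:
  fixes n :: nat
  assumes "n \<ge> 1"
  shows "\<exists>V mult. fin_conn_graph V mult \<and>
           \<not> generates V mult {(m, f). m \<le> n - 1 \<and> f \<in> RK V mult m}"
proof (intro exI conjI)
  show "fin_conn_graph {0,1} (M n)"
  proof -
    have "(0::nat, 1::nat) \<in> {(a, b). M n a b > 0}\<^sup>*" using assms by (auto simp: M_def)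
    moreover have "(1::nat, 0::nat) \<in> {(a, b). M n a b > 0}\<^sup>*" using assms by (auto simp: M_def)
    ultimately show ?thesis unfolding fin_conn_graph_def
      by (auto simp: M_def split: if_splits)
  qed
  show "\<not> generates {0,1} (M n) {(m, f). m \<le> n - 1 \<and> f \<in> RK {0,1} (M n) m}"
  proof
    assume G: "generates {0,1} (M n) {(m, f). m \<le> n - 1 \<and> f \<in> RK {0,1} (M n) m}"
    define h :: "nat \<Rightarrow> int" where "h = (\<lambda>x. if x = 1 then int n - 1 else 0)"
    have "h \<in> RK {0,1} (M n) n" unfolding RK_iff h_def using assms
      by (simp add: algebra_simps)
    with G obtain ts :: "(int \<times> (nat \<times> (nat \<Rightarrow> int)) list) list" where
      ne: "ts \<noteq> []" and
      ok: "\<forall>t\<in>set ts. set (snd t) \<subseteq> {(m, f). m \<le> n - 1 \<and> f \<in> RK {0,1} (M n) m}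
              \<and> sum_list (map fst (snd t)) = n" and
      hv: "\<forall>x\<in>{0,1}. h x = Max ((\<lambda>t. fst t + sum_list (map (\<lambda>g. snd g x) (snd t))) ` set ts)"
      unfolding generates_def by blast
    define F :: "nat \<Rightarrow> int \<times> (nat \<times> (nat \<Rightarrow> int)) list \<Rightarrow> int" where "F x = (\<lambda>t. fst t + sum_list (map (\<lambda>g. snd g x) (snd t)))" for x :: nat
    have h1: "h 1 = Max (F 1 ` set ts)" using hv by (simp add: F_def)
    have h0: "h 0 = Max (F 0 ` set ts)" using hv by (simp add: F_def)
    have "Max (F 1 ` set ts) \<in> F 1 ` set ts" using ne by (intro Max_in) auto
    then obtain t where t: "t \<in> set ts" "h 1 = F 1 t" using h1 by auto
    have "F 0 t \<le> h 0" using h0 t(1) by simp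
    have gb: "\<forall>g\<in>set (snd t). (int n - 1) * (snd g 1 - snd g 0) \<le> (int n - 2) * int (fst g)"
    proof
      fix g assume "g \<in> set (snd t)"
      moreover have "set (snd t) \<subseteq> {(m, f). m \<le> n - 1 \<and> f \<in> RK {0,1} (M n) m}" using ok t(1) by blast
      ultimately have "g \<in> {(m, f). m \<le> n - 1 \<and> f \<in> RK {0,1} (M n) m}" by blast
      then have "fst g \<le> n - 1" "snd g \<in> RK {0,1} (M n) (fst g)" by (auto simp: case_prod_beta)
      then show "(int n - 1) * (snd g 1 - snd g 0) \<le> (int n - 2) * int (fst g)"
        using gen_bound[OF assms, of "fst g" "snd g 1 - snd g 0"]
        unfolding RK_iff by (simp add: algebra_simps)
    qed
    have "(int n - 1) * (sum_list (map (\<lambda>g. snd g 1) (snd t)) - sum_list (map (\<lambda>g. snd g 0) (snd t)))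
          \<le> (int n - 2) * int n"
      using list_bound[OF gb] ok t(1) by simp
    moreover have "h 1 - h 0 \<le> sum_list (map (\<lambda>g. snd g 1) (snd t)) - sum_list (map (\<lambda>g. snd g 0) (snd t))"
      using t(2) \<open>F 0 t \<le> h 0\<close> by (simp add: F_def)
    moreover have "int n - 1 \<ge> 0" using assms by simp
    ultimately have "(int n - 1) * (h 1 - h 0) \<le> (int n - 2) * int n"
      by (meson mult_left_mono order_trans)
    then show False by (simp add: h_def algebra_simps)
  qed
qed

end
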